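(* Let $\mathbf{k}$ be any field, $p\ge 3$ an integer, and $S=\mathbf{k}[e_1,\ldots,e_{2p}]$. Let $f_0=t^2+e_pt+e_{2p}$ and $f_i=e_it+e_{p+i}$ for $1\le i\le p-1$, in $S[t]$. Then the elimination ideal $I=\langle f_0,\ldots,f_{p-1}\rangle\cap S$ equals the ideal $J$ of $S$ generated by the $3\times 3$ minors of the $3\times(2p-1)$ matrix $$\begin{pmatrix} 1 & e_1 & 0 & e_2 & 0 & \cdots & e_{p-1} & 0\\ e_p & e_{p+1} & e_1 & e_{p+2} & e_2 & \cdots & e_{2p-1} & e_{p-1}\\ e_{2p} & 0 & e_{p+1} & 0 & e_{p+2} & \cdots & 0 & e_{2p-1}\end{pmatrix}.$$
   Context: The ideal $\langle f_0,\dots,f_{p-1}\rangle$ is taken in $S[t]$ and intersected with $S\subset S[t]$. The matrix consists of the column $(1,e_p,e_{2p})^T$ followed, for each $i=1,\dots,p-1$, by the two columns $(e_i,e_{p+i},0)^T$ and $(0,e_i,e_{p+i})^T$. *)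

theory Defs
  imports Main "HOL-Library.Poly_Mapping"
begin

text \<open>Variable x_0 plays the role of t, and x_i the role of e_i (1 \<le> i \<le> 2p).\<close>

type_synonym 'k mpoly = "(nat \<Rightarrow>\<^sub>0 nat) \<Rightarrow>\<^sub>0 'k"

definition mvar :: "nat \<Rightarrow> 'k::comm_ring_1 mpoly" where
  "mvar i = Poly_Mapping.single (Poly_Mapping.single i 1) 1"

definition poly_ring_in :: "nat set \<Rightarrow> 'k::comm_ring_1 mpoly set" where
  "poly_ring_in V = {q::'k mpoly. \<forall>m\<in>Poly_Mapping.keys q. Poly_Mapping.keys m \<subseteq> V}"

definition ringS :: "nat \<Rightarrow> 'k::comm_ring_1 mpoly set" where
  "ringS p = poly_ring_in {1..2*p}"

definition ringSt :: "nat \<Rightarrow> 'k::comm_ring_1 mpoly set" where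
  "ringSt p = poly_ring_in {0..2*p}"

definition gen_ideal :: "'a::comm_ring_1 set \<Rightarrow> 'a set \<Rightarrow> 'a set" where
  "gen_ideal R G = {(\<Sum>g\<in>G. c g * g) | c. \<forall>g\<in>G. c g \<in> R}"

definition tvar :: "'k::comm_ring_1 mpoly" where "tvar = mvar 0"
definition evar :: "nat \<Rightarrow> 'k::comm_ring_1 mpoly" where "evar i = mvar i"

definition fgen :: "nat \<Rightarrow> nat \<Rightarrow> 'k::comm_ring_1 mpoly" where
  "fgen p i = (if i = 0 then tvar^2 + evar p * tvar + evar (2*p)
               else evar i * tvar + evar (p+i))"

definition Mat :: "nat \<Rightarrow> nat \<Rightarrow> nat \<Rightarrow> 'k::comm_ring_1 mpoly" where
  "Mat p r j =
    (if j = 0 then (if r = 0 then 1 else if r = 1 then evar p else evar (2*p))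
     else if odd j then (let i = (j+1) div 2 in
            if r = 0 then evar i else if r = 1 then evar (p+i) else 0)
     else (let i = j div 2 in
            if r = 0 then 0 else if r = 1 then evar i else evar (p+i)))"

definition det3 :: "(nat \<Rightarrow> nat \<Rightarrow> 'a::comm_ring_1) \<Rightarrow> nat \<Rightarrow> nat \<Rightarrow> nat \<Rightarrow> 'a" where
  "det3 A a b c =
     A 0 a * (A 1 b * A 2 c - A 1 c * A 2 b)
   - A 0 b * (A 1 a * A 2 c - A 1 c * A 2 a)
   + A 0 c * (A 1 a * A 2 b - A 1 b * A 2 a)"

definition minors3 :: "nat \<Rightarrow> 'k::comm_ring_1 mpoly set" where
  "minors3 p = {det3 (Mat p) a b c | a b c. a < b \<and> b < c \<and> c < 2*p - 1}"

end

theory Submission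
  imports Defs "HOL-Computational_Algebra.Polynomial"
begin

definition is_hom :: "('a::comm_ring_1 \<Rightarrow> 'b::comm_ring_1) \<Rightarrow> bool" where
  "is_hom H \<longleftrightarrow> H 1 = 1 \<and> (\<forall>x y. H (x + y) = H x + H y) \<and> (\<forall>x y. H (x * y) = H x * H y)"

lemma is_homD1:
  assumes "is_hom H"
  shows "H 1 = 1" "H (x + y) = H x + H y" "H (x * y) = H x * H y"
  using assms by (auto simp: is_hom_def)

lemma is_homD2:
  assumes "is_hom H"
  shows "H 0 = 0"
proof -
  have "H (0 + 0) = H 0 + H 0" using assms unfolding is_hom_def by blast
  then show ?thesis by simp
qed

lemma is_homD3:
  assumes "is_hom H"
  shows "H (- x) = - H x"
proof -
  have "H (x + - x) = H x + H (- x)" using assms unfolding is_hom_def by blast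
  then show ?thesis using is_homD2[OF assms] by (simp add: eq_neg_iff_add_eq_0 add.commute)
qed

lemma is_homD4:
  assumes "is_hom H"
  shows "H (x - y) = H x - H y"
  using is_homD1(2)[OF assms, of x "- y"] is_homD3[OF assms, of y] by simp

lemmas is_homD = is_homD1 is_homD2 is_homD3 is_homD4

lemma hom_sum: "is_hom H \<Longrightarrow> H (sum f A) = (\<Sum>a\<in>A. H (f a))"
  by (induction A rule: infinite_finite_induct) (auto simp: is_homD)

lemma hom_prod: "is_hom H \<Longrightarrow> H (prod f A) = (\<Prod>a\<in>A. H (f a))"
  by (induction A rule: infinite_finite_induct) (auto simp: is_homD)

lemma hom_power: "is_hom H \<Longrightarrow> H (x ^ n) = H x ^ n"
  by (induction n) (auto simp: is_homD)

definition monev :: "(nat \<Rightarrow> 'a::comm_ring_1) \<Rightarrow> (nat \<Rightarrow>\<^sub>0 nat) \<Rightarrow> 'a" where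
  "monev \<sigma> m = (\<Prod>i\<in>Poly_Mapping.keys m. \<sigma> i ^ Poly_Mapping.lookup m i)"

definition ev :: "('k::comm_ring_1 \<Rightarrow> 'a::comm_ring_1) \<Rightarrow> (nat \<Rightarrow> 'a) \<Rightarrow> 'k mpoly \<Rightarrow> 'a" where
  "ev \<kappa> \<sigma> q = (\<Sum>m\<in>Poly_Mapping.keys q. \<kappa> (Poly_Mapping.lookup q m) * monev \<sigma> m)"

lemma monev_superset:
  assumes "finite A" "Poly_Mapping.keys m \<subseteq> A"
  shows "monev \<sigma> m = (\<Prod>i\<in>A. \<sigma> i ^ Poly_Mapping.lookup m i)"
  unfolding monev_def
  by (rule prod.mono_neutral_left) (use assms in \<open>auto simp: in_keys_iff\<close>)

lemma monev_add: "monev \<sigma> (m + n) = monev \<sigma> m * monev \<sigma> n"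
proof -
  let ?A = "Poly_Mapping.keys m \<union> Poly_Mapping.keys n"
  have "Poly_Mapping.keys (m + n) \<subseteq> ?A" by (rule keys_add)
  then have "monev \<sigma> (m + n) = (\<Prod>i\<in>?A. \<sigma> i ^ Poly_Mapping.lookup (m+n) i)"
    by (intro monev_superset) auto
  also have "\<dots> = (\<Prod>i\<in>?A. \<sigma> i ^ Poly_Mapping.lookup m i) * (\<Prod>i\<in>?A. \<sigma> i ^ Poly_Mapping.lookup n i)"
    by (simp add: lookup_add power_add prod.distrib)
  also have "\<dots> = monev \<sigma> m * monev \<sigma> n"
    by (subst (1 2) monev_superset[where A="?A"]) auto
  finally show ?thesis .
qed

lemma monev_zero [simp]: "monev \<sigma> 0 = 1"
  by (simp add: monev_def)

locale evloc =
  fixes \<kappa> :: "'k::comm_ring_1 \<Rightarrow> 'a::comm_ring_1"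
  assumes kh: "is_hom \<kappa>"
begin

lemma ev_superset:
  assumes "finite A" "Poly_Mapping.keys q \<subseteq> A"
  shows "ev \<kappa> \<sigma> q = (\<Sum>m\<in>A. \<kappa> (Poly_Mapping.lookup q m) * monev \<sigma> m)"
  unfolding ev_def
  by (rule sum.mono_neutral_left) (use assms in \<open>auto simp: in_keys_iff is_homD[OF kh]\<close>)

lemma ev_add: "ev \<kappa> \<sigma> (a + b) = ev \<kappa> \<sigma> a + ev \<kappa> \<sigma> b"
proof -
  let ?A = "Poly_Mapping.keys a \<union> Poly_Mapping.keys b"
  have "Poly_Mapping.keys (a + b) \<subseteq> ?A" by (rule keys_add)
  then have "ev \<kappa> \<sigma> (a + b) = (\<Sum>m\<in>?A. \<kappa> (Poly_Mapping.lookup (a+b) m) * monev \<sigma> m)"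
    by (intro ev_superset) auto
  also have "\<dots> = (\<Sum>m\<in>?A. \<kappa> (Poly_Mapping.lookup a m) * monev \<sigma> m) + (\<Sum>m\<in>?A. \<kappa> (Poly_Mapping.lookup b m) * monev \<sigma> m)"
    by (simp add: lookup_add is_homD[OF kh] distrib_right sum.distrib)
  also have "\<dots> = ev \<kappa> \<sigma> a + ev \<kappa> \<sigma> b"
    by (subst (1 2) ev_superset[where A="?A"]) auto
  finally show ?thesis .
qed

lemma ev_zero [simp]: "ev \<kappa> \<sigma> 0 = 0"
  by (simp add: ev_def)

lemma ev_single [simp]: "ev \<kappa> \<sigma> (Poly_Mapping.single m c) = \<kappa> c * monev \<sigma> m"
  by (cases "c = 0") (auto simp: ev_def is_homD[OF kh])

lemma update_eq_add: "a \<notin> Poly_Mapping.keys f \<Longrightarrow> Poly_Mapping.update a b f = f + Poly_Mapping.single a b"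
  by (rule poly_mapping_eqI) (auto simp: lookup_update lookup_add lookup_single in_keys_iff when_def)

lemma mpoly_induct [case_names zero add]:
  assumes "P 0" "\<And>f m c. P f \<Longrightarrow> P (f + Poly_Mapping.single m c)"
  shows "P (q :: 'k mpoly)"
  by (induction q rule: update_induct) (use assms in \<open>auto simp: update_eq_add\<close>)

lemma ev_mult: "ev \<kappa> \<sigma> (a * b) = ev \<kappa> \<sigma> a * ev \<kappa> \<sigma> b"
proof (induction a rule: mpoly_induct)
  case zero then show ?case by simp
next
  case (add f m c)
  have "ev \<kappa> \<sigma> (Poly_Mapping.single m c * b) = ev \<kappa> \<sigma> (Poly_Mapping.single m c) * ev \<kappa> \<sigma> b"
  proof (induction b rule: mpoly_induct)
    case zero then show ?case by simp
  next
    case (add g n d)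
    then show ?case
      by (simp add: distrib_left ev_add mult_single monev_add is_homD[OF kh] ac_simps)
  qed
  then show ?case using add by (simp add: distrib_right ev_add)
qed

lemma ev_one [simp]: "ev \<kappa> \<sigma> 1 = 1"
  using ev_single[of \<sigma> 0 1] by (simp add: is_homD[OF kh] flip: single_one)

lemma ev_hom: "is_hom (ev \<kappa> \<sigma>)"
  by (simp add: is_hom_def ev_add ev_mult)

lemma ev_mvar [simp]: "ev \<kappa> \<sigma> (mvar i) = \<sigma> i"
  by (simp add: mvar_def monev_def is_homD[OF kh])

end

lemma hom_single0: "is_hom (\<lambda>c. Poly_Mapping.single 0 c :: 'k::comm_ring_1 mpoly)"
  by (simp add: is_hom_def single_add mult_single)

interpretation S0: evloc "\<lambda>c. Poly_Mapping.single 0 c :: 'k::comm_ring_1 mpoly"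
  by unfold_locales (rule hom_single0)

lemma mvar_pow: "(mvar i :: 'k::comm_ring_1 mpoly) ^ k = Poly_Mapping.single (Poly_Mapping.single i k) 1"
  by (induction k) (simp_all add: mvar_def mult_single single_add[symmetric] add.commute)

lemma prod_single1: "(\<Prod>i\<in>A. Poly_Mapping.single (f i) (1::'k::comm_ring_1)) = Poly_Mapping.single (sum f A) 1"
  by (induction A rule: infinite_finite_induct) (simp_all add: mult_single)

lemma sum_single_keys: "(\<Sum>i\<in>Poly_Mapping.keys m. Poly_Mapping.single i (Poly_Mapping.lookup m i)) = (m :: nat \<Rightarrow>\<^sub>0 nat)"
  by (rule poly_mapping_eqI) (auto simp: lookup_sum lookup_single when_def in_keys_iff)

lemma monev_mvar: "monev mvar m = (Poly_Mapping.single m 1 :: 'k::comm_ring_1 mpoly)"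
  by (simp add: monev_def mvar_pow prod_single1 sum_single_keys)

lemma single_as_monev: "Poly_Mapping.single m c = Poly_Mapping.single 0 c * (monev mvar m :: 'k::comm_ring_1 mpoly)"
  by (simp add: monev_mvar mult_single)

lemma ev_id: "ev (\<lambda>c. Poly_Mapping.single 0 c) mvar q = (q :: 'k::comm_ring_1 mpoly)"
  by (induction q rule: S0.mpoly_induct) (simp_all add: S0.ev_add flip: single_as_monev)

lemma hom_ev: "is_hom H \<Longrightarrow> H (ev \<kappa> \<sigma> q) = ev (\<lambda>c. H (\<kappa> c)) (\<lambda>i. H (\<sigma> i)) q"
  by (simp add: ev_def monev_def hom_sum hom_prod hom_power is_homD)

lemma ev_cong:
  assumes "\<And>m i. m \<in> Poly_Mapping.keys q \<Longrightarrow> i \<in> Poly_Mapping.keys m \<Longrightarrow> \<sigma> i = \<sigma>' i"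
  shows "ev \<kappa> \<sigma> q = ev \<kappa> \<sigma>' q"
  unfolding ev_def monev_def using assms by (intro sum.cong refl arg_cong2[where f="(*)"] prod.cong) auto

lemma ev_cong_ring:
  assumes "q \<in> poly_ring_in V" "\<And>i. i \<in> V \<Longrightarrow> \<sigma> i = \<sigma>' i"
  shows "ev \<kappa> \<sigma> q = ev \<kappa> \<sigma>' q"
  using assms by (intro ev_cong) (auto simp: poly_ring_in_def)

lemma pr_zero [simp]: "0 \<in> poly_ring_in V"
  by (simp add: poly_ring_in_def)

lemma pr_single0 [simp]: "Poly_Mapping.single 0 c \<in> poly_ring_in V"
  by (simp add: poly_ring_in_def)

lemma pr_one [simp]: "1 \<in> poly_ring_in V"
  using pr_single0[of 1 V] by (simp only: single_one)

lemma pr_add [simp]: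
  assumes a: "a \<in> poly_ring_in V" and b: "b \<in> poly_ring_in V" shows "a + b \<in> poly_ring_in V"
  unfolding poly_ring_in_def mem_Collect_eq
proof (intro ballI)
  fix m assume "m \<in> Poly_Mapping.keys (a + b)"
  then have "m \<in> Poly_Mapping.keys a \<or> m \<in> Poly_Mapping.keys b" using keys_add[of a b] by blast
  then show "Poly_Mapping.keys m \<subseteq> V" using a b unfolding poly_ring_in_def by blast
qed

lemma pr_uminus [simp]: "a \<in> poly_ring_in V \<Longrightarrow> - a \<in> poly_ring_in V"
  unfolding poly_ring_in_def by simp

lemma pr_diff [simp]: "a \<in> poly_ring_in V \<Longrightarrow> b \<in> poly_ring_in V \<Longrightarrow> a - b \<in> poly_ring_in V"
  using pr_add[of a V "- b"] by simp

lemma keys_add_nat: "Poly_Mapping.keys (m + n :: nat \<Rightarrow>\<^sub>0 nat) = Poly_Mapping.keys m \<union> Poly_Mapping.keys n"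
  by (auto simp: in_keys_iff lookup_add)

lemma pr_mult [simp]:
  assumes a: "a \<in> poly_ring_in V" and b: "b \<in> poly_ring_in V" shows "a * b \<in> poly_ring_in V"
proof -
  show ?thesis unfolding poly_ring_in_def mem_Collect_eq
  proof (intro ballI)
    fix m assume "m \<in> Poly_Mapping.keys (a * b)"
    then obtain x y where "m = x + y" "x \<in> Poly_Mapping.keys a" "y \<in> Poly_Mapping.keys b"
      using keys_mult[of a b] by blast
    then show "Poly_Mapping.keys m \<subseteq> V" using a b by (auto simp: poly_ring_in_def keys_add_nat)
  qed
qed

lemma pr_sum: "(\<And>x. x \<in> A \<Longrightarrow> f x \<in> poly_ring_in V) \<Longrightarrow> sum f A \<in> poly_ring_in V"
  by (induction A rule: infinite_finite_induct) auto

lemma pr_prod: "(\<And>x. x \<in> A \<Longrightarrow> f x \<in> poly_ring_in V) \<Longrightarrow> prod f A \<in> poly_ring_in V"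
  by (induction A rule: infinite_finite_induct) auto

lemma pr_power: "a \<in> poly_ring_in V \<Longrightarrow> a ^ n \<in> poly_ring_in V"
  by (induction n) auto

lemma pr_mvar: "(mvar i :: 'k::comm_ring_1 mpoly) \<in> poly_ring_in V \<longleftrightarrow> i \<in> V"
  by (simp add: poly_ring_in_def mvar_def)

lemma ev_in_pr:
  assumes "\<And>i. \<sigma> i \<in> poly_ring_in V"
  shows "ev (\<lambda>c. Poly_Mapping.single 0 c) \<sigma> q \<in> poly_ring_in V"
  unfolding ev_def monev_def using assms by (intro pr_sum pr_mult pr_prod pr_power) auto

abbreviation subst0 :: "nat \<Rightarrow> 'k::comm_ring_1 mpoly \<Rightarrow> 'k mpoly" where
  "subst0 n \<equiv> ev (\<lambda>c. Poly_Mapping.single 0 c) (mvar(n := 0))"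

lemma single_split:
  assumes "n \<in> Poly_Mapping.keys (m :: nat \<Rightarrow>\<^sub>0 nat)"
  shows "Poly_Mapping.single n 1 + (m - Poly_Mapping.single n 1) = m"
  using assms by (intro poly_mapping_eqI) (auto simp: lookup_add lookup_minus lookup_single when_def in_keys_iff)

lemma subst0_div: "\<exists>v. q - subst0 n q = mvar n * (v :: 'k::comm_ring_1 mpoly)"
proof (induction q rule: S0.mpoly_induct)
  case zero then show ?case by (intro exI[of _ 0]) simp
next
  case (add f m c)
  then obtain v where v: "f - subst0 n f = mvar n * v" by blast
  show ?case
  proof (cases "n \<in> Poly_Mapping.keys m")
    case True
    have z: "((mvar(n := 0)) n :: 'k mpoly) ^ Poly_Mapping.lookup m n = 0"
      using True by (simp add: in_keys_iff zero_power)
    have "\<exists>a\<in>Poly_Mapping.keys m. (mvar(n:=0)) a ^ Poly_Mapping.lookup m a = (0::'k mpoly)"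
      using True z by blast
    then have "monev (mvar(n := 0)) m = (0 :: 'k mpoly)"
      unfolding monev_def by (rule prod_zero[OF finite_keys])
    then have e: "subst0 n (Poly_Mapping.single m c) = 0" by simp
    have "Poly_Mapping.single m c = mvar n * Poly_Mapping.single (m - Poly_Mapping.single n 1) c"
      unfolding mvar_def mult_single single_split[OF True] by simp
    moreover have "(f + Poly_Mapping.single m c) - subst0 n (f + Poly_Mapping.single m c)
       = (f - subst0 n f) + Poly_Mapping.single m c"
      by (simp only: S0.ev_add e) simp
    ultimately show ?thesis using v
      by (intro exI[of _ "v + Poly_Mapping.single (m - Poly_Mapping.single n 1) c"])
        (simp only: distrib_left)
  next
    case False
    have "monev (mvar(n := 0)) m = (monev mvar m :: 'k mpoly)"
      unfolding monev_def using False by (intro prod.cong) auto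
    then have e: "subst0 n (Poly_Mapping.single m c) = Poly_Mapping.single m c"
      by (simp flip: single_as_monev)
    have "(f + Poly_Mapping.single m c) - subst0 n (f + Poly_Mapping.single m c)
       = (f - subst0 n f)"
      by (simp only: S0.ev_add e) simp
    also have "\<dots> = mvar n * v" by (rule v)
    finally show ?thesis by blast
  qed
qed

lemma mvar_nonzero: "(mvar n :: 'k::field mpoly) \<noteq> 0"
  unfolding mvar_def by (metis keys_single keys_zero one_neq_zero insert_not_empty)

lemma koszul:
  assumes "finite V" "(\<Sum>j\<in>V. u j * mvar j) = (0::'k::field mpoly)"
  shows "\<exists>w. (\<forall>j k. w j k = - w k j) \<and> (\<forall>j. w j j = 0) \<and> (\<forall>j\<in>V. u j = (\<Sum>k\<in>V. w j k * mvar k))"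
  using assms
proof (induction V arbitrary: u rule: finite_induct)
  case empty
  then show ?case by (intro exI[of _ "\<lambda>_ _. 0"]) auto
next
  case (insert n V u)
  let ?\<pi> = "subst0 n :: 'k mpoly \<Rightarrow> 'k mpoly"
  have hom: "is_hom ?\<pi>" by (rule S0.ev_hom)
  have pv: "j \<in> V \<Longrightarrow> ?\<pi> (mvar j) = mvar j" for j using insert(2) by auto
  have "?\<pi> (\<Sum>j\<in>insert n V. u j * mvar j) = 0" using insert(4) by (simp add: is_homD[OF hom])
  then have "(\<Sum>j\<in>V. ?\<pi> (u j) * mvar j) = 0"
    using insert(1,2) pv by (simp add: hom_sum[OF hom] is_homD[OF hom] cong: sum.cong)
  then obtain w' where w': "\<forall>j k. w' j k = - w' k j" "\<forall>j. w' j j = 0"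
    "\<forall>j\<in>V. ?\<pi> (u j) = (\<Sum>k\<in>V. w' j k * mvar k)"
    using insert(3)[of "\<lambda>j. ?\<pi> (u j)"] by blast
  have "\<forall>j. \<exists>v. u j - ?\<pi> (u j) = mvar n * v" using subst0_div by blast
  then obtain v where v: "\<And>j. u j - ?\<pi> (u j) = mvar n * v j" by metis
  have uj: "u j = (\<Sum>k\<in>V. w' j k * mvar k) + mvar n * v j" if "j \<in> V" for j
    using w'(3) that v[of j] by (simp add: algebra_simps)
  have "(\<Sum>j\<in>insert n V. u j * mvar j) = u n * mvar n + (\<Sum>j\<in>V. u j * mvar j)"
    using insert(1,2) by (rule sum.insert)
  then have "0 = (\<Sum>j\<in>V. u j * mvar j) + u n * mvar n"
    using insert(4) by (simp only: add.commute)
  also have "(\<Sum>j\<in>V. u j * mvar j) = (\<Sum>j\<in>V. (\<Sum>k\<in>V. w' j k * mvar k) * mvar j) + mvar n * (\<Sum>j\<in>V. v j * mvar j)"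
  proof -
    have "(\<Sum>j\<in>V. u j * mvar j) = (\<Sum>j\<in>V. (\<Sum>k\<in>V. w' j k * mvar k) * mvar j + mvar n * (v j * mvar j))"
    proof (rule sum.cong)
      fix j assume j: "j \<in> V"
      show "u j * mvar j = (\<Sum>k\<in>V. w' j k * mvar k) * mvar j + mvar n * (v j * mvar j)"
        by (simp only: uj[OF j] distrib_right mult.assoc)
    qed simp
    then show ?thesis by (simp only: sum.distrib sum_distrib_left)
  qed
  also have "(\<Sum>j\<in>V. (\<Sum>k\<in>V. w' j k * mvar k) * mvar j) = (0 :: 'k mpoly)"
  proof -
    have "(\<Sum>j\<in>V. (\<Sum>k\<in>V. w' j k * mvar k) * mvar j) = (\<Sum>j\<in>V. ?\<pi> (u j) * mvar j)"
      by (rule sum.cong) (use w'(3) in auto)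
    also have "\<dots> = 0" by fact
    finally show ?thesis .
  qed
  finally have "0 = mvar n * (\<Sum>j\<in>V. v j * mvar j) + u n * mvar n"
    by simp
  then have "mvar n * ((\<Sum>j\<in>V. v j * mvar j) + u n) = 0"
    by (simp only: distrib_left mult.commute[of "u n"])
  then have "(\<Sum>j\<in>V. v j * mvar j) + u n = 0"
    using mvar_nonzero[of n] by (simp only: mult_eq_0_iff) blast
  then have un: "u n = - (\<Sum>j\<in>V. v j * mvar j)"
    by (simp add: eq_neg_iff_add_eq_0 add.commute)
  define w where "w j k = (if j = n \<and> k = n then 0 else if k = n then v j else if j = n then - v k else w' j k)" for j k
  have "w j k = - w k j" for j k using w'(1)[rule_format, of j k] unfolding w_def by auto
  then have "\<forall>j k. w j k = - w k j" by blast
  moreover have "\<forall>j. w j j = 0" using w'(2) by (auto simp: w_def)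
  moreover have "\<forall>j\<in>insert n V. u j = (\<Sum>k\<in>insert n V. w j k * mvar k)"
  proof
    fix j assume j: "j \<in> insert n V"
    show "u j = (\<Sum>k\<in>insert n V. w j k * mvar k)"
    proof (cases "j = n")
      case True
      have "(\<Sum>k\<in>V. w j k * mvar k) = (\<Sum>k\<in>V. - v k * mvar k)"
        using insert(2) True by (intro sum.cong) (auto simp: w_def)
      then show ?thesis using insert(1,2) True un by (simp add: w_def sum_negf)
    next
      case False
      then have jV: "j \<in> V" using j by auto
      have "(\<Sum>k\<in>V. w j k * mvar k) = (\<Sum>k\<in>V. w' j k * mvar k)"
        using insert(2) False by (intro sum.cong) (auto simp: w_def)
      then show ?thesis using insert(1,2) False uj[OF jV] by (simp add: w_def ac_simps)
    qed
  qed
  ultimately show ?case by blast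
qed

lemma hom_const_poly: "is_hom (\<lambda>c. [:c:] :: 'a::comm_ring_1 poly)"
  by (simp add: is_hom_def)

lemma hom_const_single: "is_hom (\<lambda>c. [:Poly_Mapping.single 0 c:] :: 'k::comm_ring_1 mpoly poly)"
  by (simp add: is_hom_def single_add mult_single mult.commute)

interpretation T0: evloc "\<lambda>c. [:Poly_Mapping.single 0 c:] :: 'k::comm_ring_1 mpoly poly"
  by unfold_locales (rule hom_const_single)

definition evt :: "'k::comm_ring_1 mpoly \<Rightarrow> 'k mpoly poly" where
  "evt = ev (\<lambda>c. [:Poly_Mapping.single 0 c:]) (\<lambda>i. if i = 0 then [:0, 1:] else [:mvar i:])"

lemma evt_hom: "is_hom evt"
  unfolding evt_def by (rule T0.ev_hom)

lemma evt_mvar: "evt (mvar i) = (if i = 0 then [:0, 1:] else [:mvar i:])"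
  unfolding evt_def by simp

lemma evt_in_S:
  assumes "q \<in> poly_ring_in V" "0 \<notin> V"
  shows "evt (q :: 'k::comm_ring_1 mpoly) = [:q:]"
proof -
  have "evt q = ev (\<lambda>c. [:Poly_Mapping.single 0 c:]) (\<lambda>i. [:mvar i:]) q"
    unfolding evt_def using assms by (intro ev_cong_ring[where V=V]) (auto intro!: gr0I)
  also have "\<dots> = [:ev (\<lambda>c. Poly_Mapping.single 0 c) mvar q:]"
    using hom_ev[OF hom_const_poly, of "\<lambda>c. Poly_Mapping.single 0 c" mvar q] by simp
  also have "\<dots> = [:q:]" by (simp add: ev_id)
  finally show ?thesis .
qed

lemma evt_fgen0:
  assumes "p \<ge> 1"
  shows "evt (fgen p 0 :: 'k::comm_ring_1 mpoly) = [:mvar (2*p), mvar p, 1:]"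
  using assms by (simp add: fgen_def tvar_def evar_def is_homD[OF evt_hom] hom_power[OF evt_hom] evt_mvar power2_eq_square)

lemma evt_fgen:
  assumes "i \<ge> 1"
  shows "evt (fgen p i :: 'k::comm_ring_1 mpoly) = [:mvar (p + i), mvar i:]"
  using assms by (simp add: fgen_def tvar_def evar_def is_homD[OF evt_hom] evt_mvar)

lemma mvar_inj: "(mvar i :: 'k::field mpoly) = mvar j \<longleftrightarrow> i = j"
  unfolding mvar_def by (metis inj_single lookup_single_eq one_neq_zero injD lookup_single_not_eq)

lemma fgen_inj:
  assumes "p \<ge> 1"
  shows "inj_on (fgen p :: nat \<Rightarrow> 'k::field mpoly) {0..<p}"
proof (rule inj_onI)
  fix i j assume i: "i \<in> {0..<p}" and j: "j \<in> {0..<p}" and eq: "(fgen p i :: 'k mpoly) = fgen p j"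
  have e: "coeff (evt (fgen p i :: 'k mpoly)) k = coeff (evt (fgen p j)) k" for k using eq by simp
  show "i = j"
  proof (cases "i = 0 \<or> j = 0")
    case True
    then show ?thesis using e[of 2] assms by (cases "i = 0"; cases "j = 0") (auto simp: evt_fgen0 evt_fgen numeral_2_eq_2)
  next
    case False
    then show ?thesis using e[of 1] assms by (auto simp: evt_fgen mvar_inj)
  qed
qed

lemma coeff_lin_mult:
  "coeff ([:a, b:] * [:c, d:]) 0 = a * c"
  "coeff ([:a, b:] * [:c, d:]) (Suc 0) = a * d + b * c"
  "coeff ([:a, b:] * [:c, d:]) 2 = b * d"
  by (simp_all add: numeral_2_eq_2 algebra_simps)

lemma deg_le1:
  assumes "r = 0 \<or> degree r < 2"
  shows "r = [:coeff r 0, coeff r 1:]"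
  using assms by (auto simp: poly_eq_iff coeff_pCons split: nat.split intro: coeff_eq_0)

lemma elim_t:
  fixes C :: "nat \<Rightarrow> 'k::field mpoly"
  assumes p: "p \<ge> 1" and hS: "h \<in> ringS p" and h: "h = (\<Sum>i\<in>{0..<p}. C i * fgen p i)"
  shows "\<exists>a b. h = (\<Sum>i\<in>{1..<p}. a i * mvar (p+i) - mvar (2*p) * (b i * mvar i)) \<and>
     (\<Sum>i\<in>{1..<p}. a i * mvar i + b i * (mvar (p+i) - mvar p * mvar i)) = 0"
proof -
  define F0 :: "'k mpoly poly" where "F0 = [:mvar (2*p), mvar p, 1:]"
  define G :: "nat \<Rightarrow> 'k mpoly poly" where "G i = [:mvar (p+i), mvar i:]" for i
  have F0nz: "F0 \<noteq> 0" and degF0: "degree F0 = 2" and lcF0: "coeff F0 (degree F0) = 1"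
    by (simp_all add: F0_def numeral_2_eq_2)
  define Q where "Q i = fst (pseudo_divmod (evt (C i)) F0)" for i
  define R where "R i = snd (pseudo_divmod (evt (C i)) F0)" for i
  have QR: "pseudo_divmod (evt (C i)) F0 = (Q i, R i)" for i by (simp add: Q_def R_def)
  have div: "evt (C i) = F0 * Q i + R i" for i
    using pseudo_divmod(1)[OF F0nz QR[of i]] by (simp add: lcF0)
  define a where "a i = coeff (R i) 0" for i
  define b where "b i = coeff (R i) 1" for i
  have Rab: "R i = [:a i, b i:]" for i
    using pseudo_divmod(2)[OF F0nz QR[of i]] degF0 unfolding a_def b_def by (intro deg_le1) simp
  have "evt h = [:h:]"
    using hS unfolding ringS_def by (intro evt_in_S) auto
  also have "evt h = (\<Sum>i\<in>{0..<p}. evt (C i) * evt (fgen p i))"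
    by (simp add: h hom_sum[OF evt_hom] is_homD[OF evt_hom])
  also have "\<dots> = evt (C 0) * F0 + (\<Sum>i\<in>{1..<p}. evt (C i) * G i)"
    using p by (simp add: sum.atLeast_Suc_lessThan evt_fgen0 evt_fgen F0_def G_def)
  also have "(\<Sum>i\<in>{1..<p}. evt (C i) * G i) = F0 * (\<Sum>i\<in>{1..<p}. Q i * G i) + (\<Sum>i\<in>{1..<p}. [:a i, b i:] * G i)"
  proof -
    have "evt (C i) * G i = F0 * (Q i * G i) + [:a i, b i:] * G i" for i
      by (subst div) (simp only: Rab distrib_right mult.assoc)
    then show ?thesis by (simp only: sum.distrib sum_distrib_left)
  qed
  finally have "[:h:] = F0 * (evt (C 0) + (\<Sum>i\<in>{1..<p}. Q i * G i)) + (\<Sum>i\<in>{1..<p}. [:a i, b i:] * G i)"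
    by (simp only: distrib_left mult.commute[of "evt (C 0)"] add.assoc)
  then have "[:h:] - (\<Sum>i\<in>{1..<p}. [:a i, b i:] * G i) = F0 * (evt (C 0) + (\<Sum>i\<in>{1..<p}. Q i * G i))"
    by (simp only: add_diff_cancel)
  then obtain W where W: "[:h:] - (\<Sum>i\<in>{1..<p}. [:a i, b i:] * G i) = F0 * W"
    by blast
  have "degree ([:h:] - (\<Sum>i\<in>{1..<p}. [:a i, b i:] * G i)) \<le> 2"
  proof (rule degree_diff_le)
    show "degree [:h:] \<le> 2" by simp
    show "degree (\<Sum>i\<in>{1..<p}. [:a i, b i:] * G i) \<le> 2"
    proof (rule degree_sum_le)
      fix i
      have "degree ([:a i, b i:] * G i) \<le> degree [:a i, b i:] + degree (G i)" by (rule degree_mult_le)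
      also have "\<dots> \<le> 1 + 1" by (intro add_mono) (simp_all add: G_def)
      finally show "degree ([:a i, b i:] * G i) \<le> 2" by simp
    qed simp
  qed
  then have dW: "degree (F0 * W) \<le> 2" using W by simp
  have "W = [:coeff W 0:]"
  proof (cases "W = 0")
    case False
    then have "degree (F0 * W) = 2 + degree W" using F0nz degF0 by (simp add: degree_mult_eq)
    then have "degree W = 0" using dW by simp
    then show ?thesis by (simp add: degree_0_id)
  qed simp
  then obtain w where Ww: "W = [:w:]" by blast
  have cL: "coeff ([:h:] - (\<Sum>i\<in>{1..<p}. [:a i, b i:] * G i)) k = coeff (F0 * [:w:]) k" for k
    using W Ww by simp
  have c0: "h - (\<Sum>i\<in>{1..<p}. a i * mvar (p+i)) = mvar (2*p) * w"
    using cL[of 0] by (simp add: coeff_sum G_def F0_def coeff_lin_mult mult.commute)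
  have c1: "- (\<Sum>i\<in>{1..<p}. a i * mvar i + b i * mvar (p+i)) = mvar p * w"
    using cL[of 1] by (simp add: coeff_sum G_def F0_def coeff_lin_mult sum_negf mult.commute add.commute)
  have c2: "- (\<Sum>i\<in>{1..<p}. b i * mvar i) = w"
    using cL[of 2] by (simp add: coeff_sum G_def F0_def coeff_lin_mult sum_negf numeral_2_eq_2 mult.commute)
  have e1: "h = (\<Sum>i\<in>{1..<p}. a i * mvar (p+i) - mvar (2*p) * (b i * mvar i))"
  proof -
    have hA: "h = mvar (2*p) * w + (\<Sum>i\<in>{1..<p}. a i * mvar (p+i))" using c0 by (simp only: diff_eq_eq)
    have "(\<Sum>i\<in>{1..<p}. a i * mvar (p+i) - mvar (2*p) * (b i * mvar i))
       = (\<Sum>i\<in>{1..<p}. a i * mvar (p+i)) - mvar (2*p) * (\<Sum>i\<in>{1..<p}. b i * mvar i)"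
      by (simp only: sum_subtractf sum_distrib_left)
    also have "\<dots> = h" by (simp add: hA c2[symmetric] algebra_simps)
    finally show ?thesis by simp
  qed
  have e2: "(\<Sum>i\<in>{1..<p}. a i * mvar i + b i * (mvar (p+i) - mvar p * mvar i)) = 0"
  proof -
    have "(\<Sum>i\<in>{1..<p}. a i * mvar i + b i * (mvar (p+i) - mvar p * mvar i))
       = (\<Sum>i\<in>{1..<p}. a i * mvar i + b i * mvar (p+i)) - mvar p * (\<Sum>i\<in>{1..<p}. b i * mvar i)"
    proof -
      have "(\<Sum>i\<in>{1..<p}. a i * mvar i + b i * (mvar (p+i) - mvar p * mvar i))
        = (\<Sum>i\<in>{1..<p}. (a i * mvar i + b i * mvar (p+i)) - mvar p * (b i * mvar i))"
        by (rule sum.cong) (simp_all add: algebra_simps)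
      then show ?thesis by (simp only: sum_subtractf sum_distrib_left)
    qed
    also have "\<dots> = 0"
    proof -
      have s1: "(\<Sum>i\<in>{1..<p}. a i * mvar i + b i * mvar (p+i)) = - (mvar p * w)"
        using c1 by (simp only: minus_equation_iff)
      show ?thesis by (simp only: s1 c2[symmetric]) simp
    qed
    finally show ?thesis .
  qed
  show ?thesis using e1 e2 by blast
qed

lemma gi_zero: "(\<And>g. g \<in> G \<Longrightarrow> 0 \<in> R) \<Longrightarrow> 0 \<in> gen_ideal R G"
  unfolding gen_ideal_def by (rule CollectI, rule exI[of _ "\<lambda>_. 0"]) simp

lemma gi_intro: "x = (\<Sum>g\<in>G. c g * g) \<Longrightarrow> (\<And>g. g \<in> G \<Longrightarrow> c g \<in> R) \<Longrightarrow> x \<in> gen_ideal R G"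
  unfolding gen_ideal_def mem_Collect_eq by (rule exI[of _ c]) simp

lemma gi_add:
  assumes "x \<in> gen_ideal R G" "y \<in> gen_ideal R G" "\<And>a b. a \<in> R \<Longrightarrow> b \<in> R \<Longrightarrow> a + b \<in> R"
  shows "x + y \<in> gen_ideal R G"
proof -
  obtain c where c: "x = (\<Sum>g\<in>G. c g * g)" "\<forall>g\<in>G. c g \<in> R" using assms(1) unfolding gen_ideal_def by blast
  obtain d where d: "y = (\<Sum>g\<in>G. d g * g)" "\<forall>g\<in>G. d g \<in> R" using assms(2) unfolding gen_ideal_def by blast
  have "x + y = (\<Sum>g\<in>G. (c g + d g) * g)" by (simp add: c d distrib_right sum.distrib)
  moreover have "\<And>g. g \<in> G \<Longrightarrow> c g + d g \<in> R" using c d assms(3) by blast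
  ultimately show ?thesis by (rule gi_intro)
qed

lemma gi_mult:
  assumes "x \<in> gen_ideal R G" "r \<in> R" "\<And>a b. a \<in> R \<Longrightarrow> b \<in> R \<Longrightarrow> a * b \<in> R"
  shows "r * x \<in> gen_ideal R G"
proof -
  obtain c where c: "x = (\<Sum>g\<in>G. c g * g)" "\<forall>g\<in>G. c g \<in> R" using assms(1) unfolding gen_ideal_def by blast
  have "r * x = (\<Sum>g\<in>G. (r * c g) * g)" by (simp add: c sum_distrib_left mult.assoc)
  moreover have "\<And>g. g \<in> G \<Longrightarrow> r * c g \<in> R" using c assms(2,3) by blast
  ultimately show ?thesis by (rule gi_intro)
qed

lemma gi_gen:
  assumes "finite G" "g \<in> G" "0 \<in> R" "1 \<in> R"
  shows "g \<in> gen_ideal R G"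
proof -
  have "(\<Sum>g'\<in>G. (if g' = g then 1 else 0) * g') = (\<Sum>g'\<in>G. if g' = g then g else 0)"
    by (rule sum.cong) auto
  also have "\<dots> = g" using assms(1,2) by simp
  finally have "g = (\<Sum>g'\<in>G. (if g' = g then 1 else 0) * g')" by simp
  moreover have "\<And>g'. g' \<in> G \<Longrightarrow> (if g' = g then 1 else 0) \<in> R" using assms by auto
  ultimately show ?thesis by (rule gi_intro)
qed

lemma gi_sum:
  assumes "\<And>i. i \<in> I \<Longrightarrow> f i \<in> gen_ideal R G" "\<And>a b. a \<in> R \<Longrightarrow> b \<in> R \<Longrightarrow> a + b \<in> R" "0 \<in> R"
  shows "sum f I \<in> gen_ideal R G"
  using assms(1)
proof (induction I rule: infinite_finite_induct)
  case (infinite A) then show ?case using gi_zero assms(3) by simp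
next
  case empty then show ?case using gi_zero assms(3) by simp
next
  case (insert x F) then show ?case using gi_add[of "f x" R G "sum f F"] assms(2) by auto
qed

lemma gi_subset: "G \<subseteq> poly_ring_in V \<Longrightarrow> gen_ideal (poly_ring_in V) G \<subseteq> poly_ring_in V"
  unfolding gen_ideal_def by (auto intro!: pr_sum)

lemma Mat0: "Mat p 0 0 = 1" "Mat p 1 0 = evar p" "Mat p 2 0 = evar (2*p)"
  by (simp_all add: Mat_def)

lemma Mat_odd:
  assumes "i \<ge> 1"
  shows "Mat p 0 (2*i-1) = evar i" "Mat p 1 (2*i-1) = evar (p+i)" "Mat p 2 (2*i-1) = 0"
proof -
  have o: "odd (2*i-1)" "(2*i-1+1) div 2 = i" "2*i-1 \<noteq> 0" using assms by auto
  show "Mat p 0 (2*i-1) = evar i" "Mat p 1 (2*i-1) = evar (p+i)" "Mat p 2 (2*i-1) = 0"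
    unfolding Mat_def using o by (simp_all add: Let_def)
qed

lemma Mat_even:
  assumes "i \<ge> 1"
  shows "Mat p 0 (2*i) = 0" "Mat p 1 (2*i) = evar i" "Mat p 2 (2*i) = evar (p+i)"
  using assms unfolding Mat_def by (simp_all add: Let_def)

lemma minors3_finite: "finite (minors3 p)"
proof -
  have "minors3 p \<subseteq> (\<lambda>(a,b,c). det3 (Mat p) a b c) ` ({..<2*p} \<times> {..<2*p} \<times> {..<2*p})"
  proof
    fix x assume "x \<in> minors3 p"
    then obtain a b c where "x = det3 (Mat p) a b c" "a < b" "b < c" "c < 2*p - 1"
      unfolding minors3_def by blast
    then show "x \<in> (\<lambda>(a,b,c). det3 (Mat p) a b c) ` ({..<2*p} \<times> {..<2*p} \<times> {..<2*p})"
      by (intro image_eqI[of _ _ "(a,b,c)"]) auto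
  qed
  then show ?thesis by (rule finite_subset) simp
qed

lemma minor_in:
  assumes "a < b" "b < c" "c < 2*p - 1"
  shows "(det3 (Mat p) a b c :: 'k::comm_ring_1 mpoly) \<in> gen_ideal UNIV (minors3 p)"
  using assms by (intro gi_gen minors3_finite) (auto simp: minors3_def)

lemma minus_in: "x \<in> gen_ideal UNIV G \<Longrightarrow> - (x::'a::comm_ring_1) \<in> gen_ideal UNIV G"
  using gi_mult[of x UNIV G "-1"] by simp

lemma D_a:
  assumes "1 \<le> j" "j < k"
  shows "(mvar k * mvar (p+j) - mvar j * mvar (p+k) :: 'k::comm_ring_1 mpoly) = - det3 (Mat p) 0 (2*j) (2*k)"
proof -
  have k: "1 \<le> k" using assms by simp
  show ?thesis unfolding det3_def
    by (simp only: Mat0 Mat_even[OF assms(1)] Mat_even[OF k]) (simp add: evar_def algebra_simps)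
qed

lemma D_b1:
  assumes "1 \<le> i" "i \<le> j"
  shows "((mvar (p+i) - mvar i * mvar p) * mvar (p+j) - mvar j * (- (mvar (2*p) * mvar i)) :: 'k::comm_ring_1 mpoly)
     = det3 (Mat p) 0 (2*i-1) (2*j)"
proof -
  have j: "1 \<le> j" using assms by simp
  show ?thesis unfolding det3_def
    by (simp only: Mat0 Mat_odd[OF assms(1)] Mat_even[OF j]) (simp add: evar_def algebra_simps)
qed

lemma D_b2:
  assumes "1 \<le> j" "j < i"
  shows "((mvar (p+i) - mvar i * mvar p) * mvar (p+j) - mvar j * (- (mvar (2*p) * mvar i)) :: 'k::comm_ring_1 mpoly)
     = - det3 (Mat p) 0 (2*j) (2*i-1)"
proof -
  have i: "1 \<le> i" using assms by simp
  show ?thesis unfolding det3_def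
    by (simp only: Mat0 Mat_odd[OF i] Mat_even[OF assms(1)]) (simp add: evar_def algebra_simps)
qed

lemma D_c:
  assumes "1 \<le> i" "i < i'"
  shows "((mvar (p+i') - mvar i' * mvar p) * (- (mvar (2*p) * mvar i)) - (mvar (p+i) - mvar i * mvar p) * (- (mvar (2*p) * mvar i')) :: 'k::comm_ring_1 mpoly)
     = - det3 (Mat p) 0 (2*i-1) (2*i'-1)"
proof -
  have i: "1 \<le> i'" using assms by simp
  show ?thesis unfolding det3_def
    by (simp only: Mat0 Mat_odd[OF i] Mat_odd[OF assms(1)]) (simp add: evar_def algebra_simps)
qed

definition zf :: "nat \<Rightarrow> nat \<Rightarrow> 'k::comm_ring_1 mpoly" where
  "zf p k = (if k < p then mvar k else mvar k - mvar (k-p) * mvar p)"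

definition cf :: "nat \<Rightarrow> nat \<Rightarrow> 'k::comm_ring_1 mpoly" where
  "cf p j = (if j < p then mvar (p+j) else - (mvar (2*p) * mvar (j-p)))"

lemma D_in:
  assumes j: "j \<in> {1..<p} \<union> {p+1..<2*p}" and k: "k \<in> {1..<p} \<union> {p+1..<2*p}" and jk: "j < k"
  shows "zf p k * cf p j - zf p j * cf p k \<in> gen_ideal UNIV (minors3 p :: 'k::comm_ring_1 mpoly set)"
proof (cases "k < p")
  case True
  then have "j < p" "1 \<le> j" using jk j by auto
  then have "zf p k * cf p j - zf p j * cf p k = (- det3 (Mat p) 0 (2*j) (2*k) :: 'k mpoly)"
    using True by (simp add: zf_def cf_def D_a[OF \<open>1 \<le> j\<close> jk, symmetric])
  moreover have "det3 (Mat p) 0 (2*j) (2*k) \<in> gen_ideal UNIV (minors3 p :: 'k mpoly set)"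
    using True jk \<open>1 \<le> j\<close> by (intro minor_in) auto
  ultimately show ?thesis using minus_in by metis
next
  case False
  obtain i where i: "k = p + i" "1 \<le> i" "i < p" using k False by (intro that[of "k - p"]) auto
  show ?thesis
  proof (cases "j < p")
    case True
    then have j1: "1 \<le> j" using j by auto
    have e: "zf p k * cf p j - zf p j * cf p k =
      ((mvar (p+i) - mvar i * mvar p) * mvar (p+j) - mvar j * (- (mvar (2*p) * mvar i)) :: 'k mpoly)"
      using True i by (simp add: zf_def cf_def)
    show ?thesis
    proof (cases "i \<le> j")
      case True
      have "det3 (Mat p) 0 (2*i-1) (2*j) \<in> gen_ideal UNIV (minors3 p :: 'k mpoly set)"
        using True i \<open>j < p\<close> by (intro minor_in) auto
      then show ?thesis by (simp only: e D_b1[OF i(2) True, of p])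
    next
      case False
      have "det3 (Mat p) 0 (2*j) (2*i-1) \<in> gen_ideal UNIV (minors3 p :: 'k mpoly set)"
        using False i j1 by (intro minor_in) auto
      moreover have ji: "j < i" using False by simp
      ultimately show ?thesis using minus_in by (simp only: e D_b2[OF j1 ji, of p])
    qed
  next
    case False
    obtain i0 where i0: "j = p + i0" "1 \<le> i0" "i0 < p" using j False by (intro that[of "j - p"]) auto
    have lt: "i0 < i" using i i0 jk by simp
    have e: "zf p k * cf p j - zf p j * cf p k =
      ((mvar (p+i) - mvar i * mvar p) * (- (mvar (2*p) * mvar i0)) - (mvar (p+i0) - mvar i0 * mvar p) * (- (mvar (2*p) * mvar i)) :: 'k mpoly)"
      using i i0 by (simp add: zf_def cf_def)
    have "det3 (Mat p) 0 (2*i0-1) (2*i-1) \<in> gen_ideal UNIV (minors3 p :: 'k mpoly set)"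
      using lt i i0 by (intro minor_in) auto
    then show ?thesis using minus_in by (simp only: e D_c[OF i0(2) lt, of p])
  qed
qed

lemma pair_split:
  fixes W T :: "nat \<Rightarrow> nat \<Rightarrow> 'a::comm_ring_1"
  assumes "\<And>j k. W j k = - W k j" "\<And>j. W j j = 0"
  shows "(\<Sum>j\<in>V. \<Sum>k\<in>V. W j k * T j k) = (\<Sum>j\<in>V. \<Sum>k\<in>V. if j < k then W j k * (T j k - T k j) else 0)"
proof -
  define A where "A j k = (if j < k then W j k * T j k else 0)" for j k
  define B where "B j k = (if k < j then W j k * T j k else 0)" for j k
  have s1: "W j k * T j k = A j k + B j k" for j k
    by (cases j k rule: linorder_cases) (simp_all add: A_def B_def assms(2))
  have "(\<Sum>j\<in>V. \<Sum>k\<in>V. W j k * T j k) = (\<Sum>j\<in>V. \<Sum>k\<in>V. A j k) + (\<Sum>j\<in>V. \<Sum>k\<in>V. B j k)"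
    by (simp only: s1 sum.distrib)
  also have "(\<Sum>j\<in>V. \<Sum>k\<in>V. B j k) = (\<Sum>k\<in>V. \<Sum>j\<in>V. B j k)"
    by (rule sum.swap)
  also have "(\<Sum>j\<in>V. \<Sum>k\<in>V. A j k) + (\<Sum>k\<in>V. \<Sum>j\<in>V. B j k) = (\<Sum>j\<in>V. \<Sum>k\<in>V. A j k + B k j)"
    by (simp only: sum.distrib)
  also have "\<dots> = (\<Sum>j\<in>V. \<Sum>k\<in>V. if j < k then W j k * (T j k - T k j) else 0)"
  proof (intro sum.cong refl)
    fix j k
    show "A j k + B k j = (if j < k then W j k * (T j k - T k j) else 0)"
      using assms(1)[of k j] by (simp add: A_def B_def algebra_simps)
  qed
  finally show ?thesis .
qed

definition sig_psi :: "nat \<Rightarrow> nat \<Rightarrow> 'k::comm_ring_1 mpoly" where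
  "sig_psi p j = (if p < j \<and> j < 2*p then mvar j + mvar (j-p) * mvar p else mvar j)"

definition sig_phi :: "nat \<Rightarrow> nat \<Rightarrow> 'k::comm_ring_1 mpoly" where
  "sig_phi p j = (if p < j \<and> j < 2*p then mvar j - mvar (j-p) * mvar p else mvar j)"

abbreviation psi :: "nat \<Rightarrow> 'k::comm_ring_1 mpoly \<Rightarrow> 'k mpoly" where
  "psi p \<equiv> ev (\<lambda>c. Poly_Mapping.single 0 c) (sig_psi p)"

abbreviation phi :: "nat \<Rightarrow> 'k::comm_ring_1 mpoly \<Rightarrow> 'k mpoly" where
  "phi p \<equiv> ev (\<lambda>c. Poly_Mapping.single 0 c) (sig_phi p)"

lemma phi_psi: "phi p (psi p q) = (q :: 'k::comm_ring_1 mpoly)"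
proof -
  have "phi p (psi p q) = ev (\<lambda>c. phi p (Poly_Mapping.single 0 c)) (\<lambda>i. phi p (sig_psi p i)) q"
    by (rule hom_ev[OF S0.ev_hom])
  also have "(\<lambda>c. phi p (Poly_Mapping.single 0 c)) = (\<lambda>c. Poly_Mapping.single 0 c :: 'k mpoly)"
    by (rule ext) simp
  also have "(\<lambda>i. phi p (sig_psi p i)) = (mvar :: nat \<Rightarrow> 'k mpoly)"
  proof (rule ext)
    fix i
    show "phi p (sig_psi p i) = (mvar i :: 'k mpoly)"
    proof (cases "p < i \<and> i < 2*p")
      case True
      have "\<not> p < i - p" using True by arith
      then have e1: "sig_phi p (i-p) = (mvar (i-p) :: 'k mpoly)" by (simp add: sig_phi_def)
      have e2: "sig_phi p p = (mvar p :: 'k mpoly)" by (simp add: sig_phi_def)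
      have e3: "sig_phi p i = (mvar i - mvar (i-p) * mvar p :: 'k mpoly)" using True by (simp add: sig_phi_def)
      have e4: "sig_psi p i = (mvar i + mvar (i-p) * mvar p :: 'k mpoly)" using True by (simp add: sig_psi_def)
      show ?thesis by (simp only: e4 S0.ev_add S0.ev_mult S0.ev_mvar e1 e2 e3) simp
    next
      case False
      then have "sig_psi p i = (mvar i :: 'k mpoly)" "sig_phi p i = (mvar i :: 'k mpoly)"
        by (auto simp: sig_psi_def sig_phi_def)
      then show ?thesis by simp
    qed
  qed
  finally show ?thesis by (simp add: ev_id)
qed

lemma I_sub_J_univ:
  fixes h :: "'k::field mpoly"
  assumes p: "p \<ge> 1" and hS: "h \<in> ringS p" and h: "h = (\<Sum>i\<in>{0..<p}. C i * fgen p i)"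
  shows "h \<in> gen_ideal UNIV (minors3 p)"
proof -
  obtain a b where hab: "h = (\<Sum>i\<in>{1..<p}. a i * mvar (p+i) - mvar (2*p) * (b i * mvar i))"
    and syz: "(\<Sum>i\<in>{1..<p}. a i * mvar i + b i * (mvar (p+i) - mvar p * mvar i)) = 0"
    using elim_t[OF p hS h] by blast
  define V where "V = {1..<p} \<union> {p+1..<2*p}"
  have finV: "finite V" by (simp add: V_def)
  have reidx: "(\<Sum>j\<in>V. f j) = (\<Sum>i\<in>{1..<p}. f i) + (\<Sum>i\<in>{1..<p}. f (p+i))" for f :: "nat \<Rightarrow> 'k mpoly"
  proof -
    have "(\<Sum>j\<in>V. f j) = (\<Sum>i\<in>{1..<p}. f i) + (\<Sum>j\<in>{p+1..<2*p}. f j)"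
      unfolding V_def by (rule sum.union_disjoint) auto
    also have "{p+1..<2*p} = {1+p..<p+p}" by auto
    also have "(\<Sum>j\<in>{1+p..<p+p}. f j) = (\<Sum>i\<in>{1..<p}. f (i+p))" by (rule sum.shift_bounds_nat_ivl)
    finally show ?thesis by (simp add: add.commute)
  qed
  define u where "u j = (if j < p then psi p (a j) else psi p (b (j-p)))" for j
  have hom_psi: "is_hom (psi p :: 'k mpoly \<Rightarrow> 'k mpoly)" by (rule S0.ev_hom)
  have hom_phi: "is_hom (phi p :: 'k mpoly \<Rightarrow> 'k mpoly)" by (rule S0.ev_hom)
  have psi_lo: "sig_psi p i = (mvar i :: 'k mpoly)" if "i \<le> p" for i
    using that by (simp add: sig_psi_def)
  have psi_hi: "sig_psi p (i+p) = (mvar (i+p) + mvar i * mvar p :: 'k mpoly)" if "1 \<le> i" "i < p" for i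
    using that by (simp add: sig_psi_def)
  have "(\<Sum>j\<in>V. u j * mvar j) = (\<Sum>i\<in>{1..<p}. u i * mvar i + u (p+i) * mvar (p+i))"
    by (simp add: reidx sum.distrib)
  also have "\<dots> = (\<Sum>i\<in>{1..<p}. psi p (a i * mvar i + b i * (mvar (p+i) - mvar p * mvar i)))"
  proof (rule sum.cong[OF refl])
    fix i assume i: "i \<in> {1..<p}"
    then show "u i * mvar i + u (p+i) * mvar (p+i) = psi p (a i * mvar i + b i * (mvar (p+i) - mvar p * mvar i))"
      by (simp add: u_def is_homD[OF hom_psi] psi_lo psi_hi algebra_simps)
  qed
  also have "\<dots> = psi p (\<Sum>i\<in>{1..<p}. a i * mvar i + b i * (mvar (p+i) - mvar p * mvar i))"
    by (rule hom_sum[OF hom_psi, symmetric])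
  also have "\<dots> = 0" by (simp only: syz is_homD2[OF hom_psi])
  finally have syzV: "(\<Sum>j\<in>V. u j * mvar j) = 0" .
  obtain w where w: "\<forall>j k. w j k = - w k j" "\<forall>j. w j j = 0" "\<forall>j\<in>V. u j = (\<Sum>k\<in>V. w j k * mvar k)"
    using koszul[OF finV syzV] by blast
  define Wf where "Wf j k = phi p (w j k)" for j k
  have Wanti: "Wf j k = - Wf k j" for j k
    using w(1)[rule_format, of j k] by (simp only: Wf_def is_homD3[OF hom_phi])
  have Wdiag: "Wf j j = 0" for j using w(2) by (simp add: Wf_def is_homD[OF hom_phi])
  have phiz: "sig_phi p k = zf p k" if "k \<in> V" for k
    using that by (auto simp: V_def zf_def sig_phi_def)
  have phiu: "phi p (u j) = (\<Sum>k\<in>V. Wf j k * zf p k)" if "j \<in> V" for j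
    using w(3) that by (simp add: hom_sum[OF hom_phi] is_homD[OF hom_phi] Wf_def phiz cong: sum.cong)
  have ha: "a i = phi p (u i)" if "i \<in> {1..<p}" for i using that by (simp add: u_def phi_psi)
  have hb: "b i = phi p (u (p+i))" if "i \<in> {1..<p}" for i using that by (simp add: u_def phi_psi)
  have "h = (\<Sum>i\<in>{1..<p}. phi p (u i) * cf p i + phi p (u (p+i)) * cf p (p+i))"
    unfolding hab
  proof (rule sum.cong[OF refl])
    fix i assume i: "i \<in> {1..<p}"
    then show "a i * mvar (p+i) - mvar (2*p) * (b i * mvar i) = phi p (u i) * cf p i + phi p (u (p+i)) * cf p (p+i)"
      unfolding ha[OF i] hb[OF i] using i by (simp add: cf_def algebra_simps)
  qed
  also have "\<dots> = (\<Sum>j\<in>V. phi p (u j) * cf p j)" by (simp add: reidx sum.distrib)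
  also have "\<dots> = (\<Sum>j\<in>V. \<Sum>k\<in>V. Wf j k * (zf p k * cf p j))"
    by (intro sum.cong refl) (simp add: phiu sum_distrib_right mult.assoc)
  also have "\<dots> = (\<Sum>j\<in>V. \<Sum>k\<in>V. if j < k then Wf j k * (zf p k * cf p j - zf p j * cf p k) else 0)"
    by (rule pair_split[OF Wanti Wdiag])
  finally have hsum: "h = \<dots>" .
  have "(\<Sum>j\<in>V. \<Sum>k\<in>V. if j < k then Wf j k * (zf p k * cf p j - zf p j * cf p k) else 0) \<in> gen_ideal UNIV (minors3 p)"
  proof (intro gi_sum)
    fix j k assume j: "j \<in> V" and k: "k \<in> V"
    show "(if j < k then Wf j k * (zf p k * cf p j - zf p j * cf p k) else 0) \<in> gen_ideal UNIV (minors3 p)"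
    proof (cases "j < k")
      case True
      have "zf p k * cf p j - zf p j * cf p k \<in> gen_ideal UNIV (minors3 p :: 'k mpoly set)"
        using j k True unfolding V_def by (rule D_in)
      then show ?thesis using True by (simp add: gi_mult)
    next
      case False
      then show ?thesis by (simp add: gi_zero)
    qed
  qed auto
  then show ?thesis using hsum by simp
qed

abbreviation Pr :: "nat \<Rightarrow> 'k::comm_ring_1 mpoly \<Rightarrow> 'k mpoly" where
  "Pr p \<equiv> ev (\<lambda>c. Poly_Mapping.single 0 c) (\<lambda>i. if i \<in> {1..2*p} then mvar i else 0)"

lemma Pr_in: "Pr p q \<in> ringS p"
  unfolding ringS_def by (intro ev_in_pr) (simp add: pr_mvar)

lemma Pr_id: "q \<in> ringS p \<Longrightarrow> Pr p q = q"
  unfolding ringS_def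
  by (subst ev_cong_ring[where V="{1..2*p}" and \<sigma>'=mvar]) (simp_all add: ev_id)

lemma Pr_ideal:
  fixes x :: "'k::comm_ring_1 mpoly"
  assumes "x \<in> gen_ideal UNIV G" "G \<subseteq> ringS p"
  shows "Pr p x \<in> gen_ideal (ringS p) G"
proof -
  obtain c where c: "x = (\<Sum>g\<in>G. c g * g)" using assms(1) unfolding gen_ideal_def by blast
  have hom: "is_hom (Pr p :: 'k mpoly \<Rightarrow> 'k mpoly)" by (rule S0.ev_hom)
  have "Pr p x = (\<Sum>g\<in>G. Pr p (c g) * g)"
    unfolding c hom_sum[OF hom] is_homD1(3)[OF hom]
  proof (intro sum.cong refl)
    fix g assume "g \<in> G"
    then have "g \<in> ringS p" using assms(2) by blast
    then show "Pr p (c g) * Pr p g = Pr p (c g) * g" by (simp only: Pr_id)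
  qed
  then show ?thesis by (rule gi_intro) (rule Pr_in)
qed

lemma evar_in: "i \<in> V \<Longrightarrow> (evar i :: 'k::comm_ring_1 mpoly) \<in> poly_ring_in V"
  by (simp add: evar_def pr_mvar)

lemma Mat_in:
  assumes "j < 2*p - 1"
  shows "(Mat p r j :: 'k::comm_ring_1 mpoly) \<in> ringS p"
proof -
  have p: "p \<ge> 1" using assms by simp
  consider "j = 0" | "odd j" | "even j" "j \<noteq> 0" by auto
  then show ?thesis
  proof cases
    case 1 then show ?thesis using p unfolding ringS_def Mat_def by (auto intro!: evar_in)
  next
    case 2
    have "(j+1) div 2 \<ge> 1" "(j+1) div 2 < p" using 2 assms by (auto elim!: oddE)
    then show ?thesis using 2 unfolding ringS_def Mat_def by (auto simp: Let_def intro!: evar_in)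
  next
    case 3
    have "j div 2 \<ge> 1" "j div 2 < p" using 3 assms by (auto elim!: evenE)
    then show ?thesis using 3 unfolding ringS_def Mat_def by (auto simp: Let_def intro!: evar_in)
  qed
qed

lemma ringS_sub: "ringS p \<subseteq> ringSt p"
proof -
  have "{1..2*p} \<subseteq> {0..2*p}" by auto
  then show ?thesis unfolding ringS_def ringSt_def poly_ring_in_def by blast
qed

lemma minors_in_S: "minors3 p \<subseteq> (ringS p :: 'k::comm_ring_1 mpoly set)"
proof
  fix x :: "'k mpoly" assume "x \<in> minors3 p"
  then obtain a b c where x: "x = det3 (Mat p) a b c" "a < b" "b < c" "c < 2*p - 1"
    unfolding minors3_def by blast
  have M: "Mat p r j \<in> poly_ring_in {1..2*p}" if "j \<in> {a, b, c}" for r j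
    using that x Mat_in[of j p r] unfolding ringS_def by auto
  show "x \<in> ringS p" unfolding x(1) det3_def ringS_def
    by (intro pr_add pr_diff pr_mult; rule M; simp)
qed

lemma det3_expand:
  fixes A :: "nat \<Rightarrow> nat \<Rightarrow> 'a::comm_ring_1" and T :: 'a
  shows "det3 A a b c = (T*T * A 0 a + T * A 1 a + A 2 a) * (A 0 b * A 1 c - A 0 c * A 1 b) - (T*T * A 0 b + T * A 1 b + A 2 b) * (A 0 a * A 1 c - A 0 c * A 1 a)
     + (T*T * A 0 c + T * A 1 c + A 2 c) * (A 0 a * A 1 b - A 0 b * A 1 a)"
  unfolding det3_def by (simp add: algebra_simps)

lemma tvar_in: "(tvar :: 'k::comm_ring_1 mpoly) \<in> ringSt p"
  by (simp add: tvar_def ringSt_def pr_mvar)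

lemma fgen_in_I:
  assumes "i < p"
  shows "(fgen p i :: 'k::comm_ring_1 mpoly) \<in> gen_ideal (ringSt p) (fgen p ` {0..<p})"
  using assms by (intro gi_gen) (auto simp: ringSt_def)

lemma col_in:
  assumes "j < 2*p - 1"
  shows "(tvar*tvar * Mat p 0 j + tvar * Mat p 1 j + Mat p 2 j :: 'k::comm_ring_1 mpoly)
    \<in> gen_ideal (ringSt p) (fgen p ` {0..<p})"
proof -
  have p: "p \<ge> 1" using assms by simp
  consider "j = 0" | "odd j" | "even j" "j \<noteq> 0" by auto
  then show ?thesis
  proof cases
    case 1
    have "(tvar*tvar * Mat p 0 j + tvar * Mat p 1 j + Mat p 2 j :: 'k mpoly) = fgen p 0"
      unfolding 1 Mat0 fgen_def by (simp add: power2_eq_square mult.commute)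
    then show ?thesis using fgen_in_I[of 0 p] p by simp
  next
    case 2
    define i where "i = (j+1) div 2"
    have i: "1 \<le> i" "i < p" "j = 2*i - 1" using 2 assms unfolding i_def by (auto elim!: oddE)
    have "(tvar*tvar * Mat p 0 j + tvar * Mat p 1 j + Mat p 2 j :: 'k mpoly) = tvar * fgen p i"
      unfolding i(3) Mat_odd[OF i(1)] fgen_def using i by (simp add: algebra_simps)
    moreover have "tvar * fgen p i \<in> gen_ideal (ringSt p) (fgen p ` {0..<p})"
      using fgen_in_I[OF i(2)] tvar_in unfolding ringSt_def by (intro gi_mult) auto
    ultimately show ?thesis by simp
  next
    case 3
    define i where "i = j div 2"
    have i: "1 \<le> i" "i < p" "j = 2*i" using 3 assms unfolding i_def by (auto elim!: evenE)
    have "(tvar*tvar * Mat p 0 j + tvar * Mat p 1 j + Mat p 2 j :: 'k mpoly) = fgen p i"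
      unfolding i(3) Mat_even[OF i(1)] fgen_def using i by (simp add: algebra_simps)
    then show ?thesis using fgen_in_I[OF i(2)] by simp
  qed
qed

lemma minor_in_I:
  assumes "a < b" "b < c" "c < 2*p - 1"
  shows "(det3 (Mat p) a b c :: 'k::comm_ring_1 mpoly) \<in> gen_ideal (ringSt p) (fgen p ` {0..<p})"
proof -
  let ?I = "gen_ideal (ringSt p) (fgen p ` {0..<p}) :: 'k mpoly set"
  let ?g = "\<lambda>j. tvar*tvar * Mat p 0 j + tvar * Mat p 1 j + Mat p 2 j :: 'k mpoly"
  have M: "Mat p r j \<in> ringSt p" if "j \<in> {a, b, c}" for r j
  proof -
    have "j < 2*p - 1" using that assms by auto
    then show ?thesis using Mat_in[of j p r] ringS_sub[of p] by blast
  qed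
  have g: "?g j \<in> ?I" if "j \<in> {a, b, c}" for j using that assms by (intro col_in) auto
  have cl1: "\<And>x y. x \<in> ringSt p \<Longrightarrow> y \<in> ringSt p \<Longrightarrow> x + y \<in> (ringSt p :: 'k mpoly set)"
    and cl2: "\<And>x y. x \<in> ringSt p \<Longrightarrow> y \<in> ringSt p \<Longrightarrow> x * y \<in> (ringSt p :: 'k mpoly set)"
    by (simp_all add: ringSt_def)
  define X :: "'k mpoly" where "X = Mat p 0 b * Mat p 1 c - Mat p 0 c * Mat p 1 b"
  define Y :: "'k mpoly" where "Y = - (Mat p 0 a * Mat p 1 c - Mat p 0 c * Mat p 1 a)"
  define Z :: "'k mpoly" where "Z = Mat p 0 a * Mat p 1 b - Mat p 0 b * Mat p 1 a"
  have XYZ: "X \<in> ringSt p" "Y \<in> ringSt p" "Z \<in> ringSt p"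
    unfolding X_def Y_def Z_def ringSt_def
    by (intro pr_diff pr_mult pr_uminus; rule M[unfolded ringSt_def]; simp)+
  have "det3 (Mat p) a b c = X * ?g a + Y * ?g b + Z * ?g c"
    unfolding det3_expand[where T=tvar] X_def Y_def Z_def by (simp add: algebra_simps)
  moreover have "X * ?g a + Y * ?g b + Z * ?g c \<in> ?I"
  proof -
    have "X * ?g a \<in> ?I" by (rule gi_mult[OF g XYZ(1) cl2]) auto
    moreover have "Y * ?g b \<in> ?I" by (rule gi_mult[OF g XYZ(2) cl2]) auto
    moreover have "Z * ?g c \<in> ?I" by (rule gi_mult[OF g XYZ(3) cl2]) auto
    ultimately show ?thesis by (intro gi_add[OF gi_add] cl1)
  qed
  ultimately show ?thesis by simp
qed

theorem corollary6p9:
  fixes p :: nat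
  assumes "p \<ge> 3"
  shows "gen_ideal (ringSt p) (fgen p ` {0..<p}) \<inter> ringS p
         = gen_ideal (ringS p) (minors3 p :: 'k::field mpoly set)"
proof
  have p1: "p \<ge> 1" using assms by simp
  show "gen_ideal (ringSt p) (fgen p ` {0..<p}) \<inter> ringS p \<subseteq> gen_ideal (ringS p) (minors3 p :: 'k mpoly set)"
  proof
    fix x :: "'k mpoly" assume x: "x \<in> gen_ideal (ringSt p) (fgen p ` {0..<p}) \<inter> ringS p"
    then obtain c where c: "x = (\<Sum>g\<in>fgen p ` {0..<p}. c g * g)"
      unfolding gen_ideal_def by blast
    have "x = (\<Sum>i\<in>{0..<p}. c (fgen p i) * fgen p i)"
      unfolding c by (simp add: sum.reindex[OF fgen_inj[OF p1]])
    then have "x \<in> gen_ideal UNIV (minors3 p)"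
      using x by (intro I_sub_J_univ[OF p1]) auto
    then have "Pr p x \<in> gen_ideal (ringS p) (minors3 p)"
      by (rule Pr_ideal) (rule minors_in_S)
    moreover have "Pr p x = x" using x by (intro Pr_id) blast
    ultimately show "x \<in> gen_ideal (ringS p) (minors3 p)" by simp
  qed
  show "gen_ideal (ringS p) (minors3 p :: 'k mpoly set) \<subseteq> gen_ideal (ringSt p) (fgen p ` {0..<p}) \<inter> ringS p"
  proof
    fix x :: "'k mpoly" assume x: "x \<in> gen_ideal (ringS p) (minors3 p)"
    have "x \<in> ringS p"
      using x gi_subset[of "minors3 p" "{1..2*p}"] minors_in_S[of p] unfolding ringS_def by blast
    moreover
    obtain c where c: "x = (\<Sum>g\<in>minors3 p. c g * g)" "\<And>g. g \<in> minors3 p \<Longrightarrow> c g \<in> ringS p"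
      using x unfolding gen_ideal_def by blast
    have "x \<in> gen_ideal (ringSt p) (fgen p ` {0..<p})"
      unfolding c(1)
    proof (rule gi_sum)
      fix g :: "'k mpoly" assume g: "g \<in> minors3 p"
      then obtain a b cc where abc: "g = det3 (Mat p) a b cc" "a < b" "b < cc" "cc < 2*p - 1"
        unfolding minors3_def by blast
      have "g \<in> gen_ideal (ringSt p) (fgen p ` {0..<p})"
        unfolding abc(1) using abc(2-4) by (rule minor_in_I)
      moreover have "c g \<in> ringSt p" using c(2)[OF g] ringS_sub by blast
      ultimately show "c g * g \<in> gen_ideal (ringSt p) (fgen p ` {0..<p})"
        by (rule gi_mult) (simp add: ringSt_def)
    qed (simp_all add: ringSt_def)
    ultimately show "x \<in> gen_ideal (ringSt p) (fgen p ` {0..<p}) \<inter> ringS p" by blast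
  qed
qed

end
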